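(* Let $n\ge1$, let $\gamma,\beta$ be proper $3$-colorings of the $2\times n$ grid graph $M^*_{2,n}$, let $H$ be an integer, and set $y_{i,j}=H+h_{\gamma,v_{1,1}}(\beta,v_{i,j})$ for $i\in\{1,2\}$, $1\le j\le n$. When the multiset $Y=\{y_{i,j}\}$ is listed from lowest to highest, any two consecutive values differ by $0$ or $2$.
   Context: $M^*_{2,n}$ is the grid graph with vertices $v_{i,j}$ ($i\in\{1,2\}$, $1\le j\le n$), $v_{i,j}$ adjacent to $v_{i,j\pm1}$ and $v_{3-i,j}$. Colors lie in $\mathbb{Z}_3$. For a proper $3$-coloring $\gamma$ and an edge traversed from $a$ to $b$, its weight $w(\gamma,\overrightarrow{ab})\in\{1,-1\}$ is congruent to $\gamma(b)-\gamma(a)$ mod $3$; the weight $w(\gamma,P)$ of a directed path is the sum of its edge weights. For any proper $3$-coloring the weight of a directed path from $u$ to $v$ depends only on $u,v$. The relative height is $h_{\gamma,u}(\beta,v)=w(\beta,P_{u,v})-w(\gamma,P_{u,v})$ for any directed path $P_{u,v}$ from $u$ to $v$. *)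

theory Defs
  imports "HOL-Library.Multiset"
begin

definition grid_V :: "nat \<Rightarrow> (nat \<times> nat) set" where
  "grid_V n = {1,2} \<times> {1..n}"

definition grid_adj :: "nat \<Rightarrow> nat \<times> nat \<Rightarrow> nat \<times> nat \<Rightarrow> bool" where
  "grid_adj n u v \<longleftrightarrow> u \<in> grid_V n \<and> v \<in> grid_V n \<and>
     ((fst u = fst v \<and> (snd v = snd u + 1 \<or> snd u = snd v + 1)) \<or>
      (snd u = snd v \<and> fst u \<noteq> fst v))"

text \<open>Colours in Z_3 are represented by the integers 0, 1, 2.\<close>
definition proper3 :: "nat \<Rightarrow> (nat \<times> nat \<Rightarrow> int) \<Rightarrow> bool" where
  "proper3 n c \<longleftrightarrow> (\<forall>v\<in>grid_V n. c v \<in> {0,1,2}) \<and>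
     (\<forall>u v. grid_adj n u v \<longrightarrow> c u \<noteq> c v)"

definition edge_weight :: "(nat \<times> nat \<Rightarrow> int) \<Rightarrow> nat \<times> nat \<Rightarrow> nat \<times> nat \<Rightarrow> int" where
  "edge_weight c a b = (if (c b - c a) mod 3 = 1 then 1 else -1)"

fun path_weight :: "(nat \<times> nat \<Rightarrow> int) \<Rightarrow> (nat \<times> nat) list \<Rightarrow> int" where
  "path_weight c (a # b # rest) = edge_weight c a b + path_weight c (b # rest)"
| "path_weight c _ = 0"

definition is_dpath :: "nat \<Rightarrow> (nat \<times> nat) list \<Rightarrow> nat \<times> nat \<Rightarrow> nat \<times> nat \<Rightarrow> bool" where
  "is_dpath n P u v \<longleftrightarrow> P \<noteq> [] \<and> hd P = u \<and> last P = v \<and> distinct P \<and>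
     (\<forall>k. Suc k < length P \<longrightarrow> grid_adj n (P ! k) (P ! Suc k))"

definition rel_height ::
  "nat \<Rightarrow> (nat \<times> nat \<Rightarrow> int) \<Rightarrow> nat \<times> nat \<Rightarrow> (nat \<times> nat \<Rightarrow> int) \<Rightarrow> nat \<times> nat \<Rightarrow> int" where
  "rel_height n \<gamma> u \<beta> v =
     (let P = (SOME P. is_dpath n P u v) in path_weight \<beta> P - path_weight \<gamma> P)"

end

theory Submission
  imports Defs
begin

lemma ew_sq:
  fixes a b d e :: int
  assumes "a \<in> {0,1,2}" "b \<in> {0,1,2}" "d \<in> {0,1,2}" "e \<in> {0,1,2}"
    "a \<noteq> b" "a \<noteq> d" "b \<noteq> e" "d \<noteq> e"
  shows "(if (b - a) mod 3 = 1 then 1 else -1) + (if (e - b) mod 3 = 1 then 1 else -1)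
       = (if (d - a) mod 3 = 1 then 1 else -1) + (if (e - d) mod 3 = (1::int) then 1 else (-1::int))"
  using assms by auto

lemma ew_anti:
  fixes a b :: int
  assumes "a \<in> {0,1,2}" "b \<in> {0,1,2}" "a \<noteq> b"
  shows "(if (b - a) mod 3 = 1 then 1 else -1) = - (if (a - b) mod 3 = 1 then 1 else (-1::int))"
  using assms by auto

fun hr :: "(nat \<times> nat \<Rightarrow> int) \<Rightarrow> nat \<Rightarrow> int" where
  "hr c 0 = 0"
| "hr c (Suc j) = hr c j + edge_weight c (1,j) (1,Suc j)"

definition hh :: "(nat \<times> nat \<Rightarrow> int) \<Rightarrow> nat \<times> nat \<Rightarrow> int" where
  "hh c v = (if fst v = 1 then hr c (snd v) else hr c (snd v) + edge_weight c (1, snd v) (2, snd v))"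

lemma adj_V: "grid_adj n u v \<Longrightarrow> u \<in> grid_V n \<and> v \<in> grid_V n"
  by (simp add: grid_adj_def)

lemma adj_sym: "grid_adj n u v \<Longrightarrow> grid_adj n v u"
  by (auto simp add: grid_adj_def)

lemma ew_hh:
  assumes p: "proper3 n c" and adj: "grid_adj n u v"
  shows "edge_weight c u v = hh c v - hh c u"
proof -
  have col: "\<And>w. w \<in> grid_V n \<Longrightarrow> c w \<in> {0,1,2}" using p by (simp add: proper3_def)
  have ne: "\<And>x y. grid_adj n x y \<Longrightarrow> c x \<noteq> c y" using p unfolding proper3_def by blast
  have anti: "\<And>x y. grid_adj n x y \<Longrightarrow> edge_weight c y x = - edge_weight c x y"
  proof -
    fix x y assume a: "grid_adj n x y"
    show "edge_weight c y x = - edge_weight c x y"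
      unfolding edge_weight_def
      using ew_anti[OF col[OF conjunct1[OF adj_V[OF a]]] col[OF conjunct2[OF adj_V[OF a]]] ne[OF a]]
      by simp
  qed
  obtain i j where u: "u = (i,j)" by force
  obtain i' j' where v: "v = (i',j')" by force
  have iv: "i \<in> {1,2}" "i' \<in> {1,2}" "j \<in> {1..n}" "j' \<in> {1..n}"
    using adj_V[OF adj] by (auto simp: u v grid_V_def)
  have sq: "hh c (2, Suc j) - hh c (2, j) = edge_weight c (2,j) (2,Suc j)" if "Suc j \<le> n" "j \<ge> 1" for j
  proof -
    have A: "grid_adj n (1,j) (1,Suc j)" "grid_adj n (1,j) (2,j)" "grid_adj n (1,Suc j) (2,Suc j)"
      "grid_adj n (2,j) (2,Suc j)" using that by (auto simp: grid_adj_def grid_V_def)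
    have "edge_weight c (1,j) (1,Suc j) + edge_weight c (1,Suc j) (2,Suc j) =
          edge_weight c (1,j) (2,j) + edge_weight c (2,j) (2,Suc j)"
      unfolding edge_weight_def
      apply (rule ew_sq)
      using A col adj_V ne by blast+
    then show ?thesis by (simp add: hh_def)
  qed
  show ?thesis
  proof (cases "i = i'")
    case True
    then have "j' = Suc j \<or> j = Suc j'" using adj by (auto simp: grid_adj_def u v)
    then show ?thesis
    proof
      assume jj: "j' = Suc j"
      show ?thesis
      proof (cases "i = 1")
        case True then show ?thesis using jj \<open>i = i'\<close> by (simp add: hh_def u v)
      next
        case False then have "i = 2" using iv by auto
        then show ?thesis using sq[of j] jj iv \<open>i = i'\<close> by (simp add: u v)
      qed
    next
      assume jj: "j = Suc j'"
      have a2: "grid_adj n v u" using adj_sym[OF adj] .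
      have "edge_weight c v u = hh c u - hh c v"
      proof (cases "i = 1")
        case True then show ?thesis using jj \<open>i = i'\<close> by (simp add: hh_def u v)
      next
        case False then have "i = 2" using iv by auto
        then show ?thesis using sq[of j'] jj iv \<open>i = i'\<close> by (simp add: u v)
      qed
      then show ?thesis using anti[OF adj] by simp
    qed
  next
    case False
    then have jj: "j = j'" using adj by (auto simp: grid_adj_def u v)
    show ?thesis
    proof (cases "i = 1")
      case True
      then have "i' = 2" using iv False by auto
      then show ?thesis using True jj by (simp add: hh_def u v)
    next
      case F2: False
      then have "i = 2" "i' = 1" using iv False by auto
      have "edge_weight c v u = hh c u - hh c v"
        using \<open>i = 2\<close> \<open>i' = 1\<close> jj by (simp add: hh_def u v)
      then show ?thesis using anti[OF adj] by simp
    qed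
  qed
qed

lemma pw_hh:
  shows "proper3 n c \<Longrightarrow> P \<noteq> [] \<Longrightarrow> (\<forall>k. Suc k < length P \<longrightarrow> grid_adj n (P ! k) (P ! Suc k)) \<Longrightarrow>
     path_weight c P = hh c (last P) - hh c (hd P)"
proof (induction c P rule: path_weight.induct)
  case (1 c a b rest)
  have "grid_adj n a b" using "1.prems"(3) by force
  moreover have "\<forall>k. Suc k < length (b # rest) \<longrightarrow> grid_adj n ((b#rest) ! k) ((b#rest) ! Suc k)"
    using "1.prems"(3) by (metis Suc_less_eq length_Cons nth_Cons_Suc)
  ultimately show ?case using "1.IH" "1.prems"(1) ew_hh[OF "1.prems"(1) \<open>grid_adj n a b\<close>] by simp
next
  case ("2_1" c) then show ?case by simp
next
  case ("2_2" c v) then show ?case by simp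
qed

lemma pw_even: "even (path_weight b P - path_weight g P)"
proof (induction P rule: path_weight.induct[of _ b])
  case (1 c a x rest)
  then show ?case by (auto simp: edge_weight_def)
qed simp_all

lemma path_row1:
  assumes "1 \<le> j" "j \<le> n"
  shows "is_dpath n (map (\<lambda>k. (1::nat,k)) [1..<Suc j]) (1,1) (1,j)"
  unfolding is_dpath_def using assms
  by (auto simp del: upt_Suc simp: hd_map last_map distinct_map inj_on_def grid_adj_def grid_V_def)

lemma path_exists:
  assumes "v \<in> grid_V n"
  shows "\<exists>P. is_dpath n P (1,1) v"
proof -
  obtain i j where v: "v = (i,j)" "i \<in> {1,2}" "1 \<le> j" "j \<le> n" using assms by (auto simp: grid_V_def)
  define Q where "Q = map (\<lambda>k. (1::nat,k)) [1..<Suc j]"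
  have Q: "is_dpath n Q (1,1) (1,j)" using path_row1 v Q_def by simp
  show ?thesis
  proof (cases "i = 1")
    case True then show ?thesis using Q v by blast
  next
    case False
    then have i2: "i = 2" using v by auto
    have lQ: "length Q = j" by (simp add: Q_def)
    have "is_dpath n (Q @ [(2,j)]) (1,1) (2,j)"
      unfolding is_dpath_def
    proof (intro conjI allI impI)
      show "hd (Q @ [(2, j)]) = (1, 1)" using Q by (auto simp: is_dpath_def)
      show "distinct (Q @ [(2, j)])" using Q by (auto simp: is_dpath_def Q_def)
      fix k assume k: "Suc k < length (Q @ [(2, j)])"
      show "grid_adj n ((Q @ [(2, j)]) ! k) ((Q @ [(2, j)]) ! Suc k)"
      proof (cases "Suc k < j")
        case True then show ?thesis using Q lQ by (auto simp: is_dpath_def nth_append)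
      next
        case False
        then have "k = j - 1" "Suc k = j" using k lQ by auto
        then show ?thesis using v lQ by (auto simp: nth_append Q_def grid_adj_def grid_V_def)
      qed
    qed simp_all
    then show ?thesis using v(1) i2 by (intro exI[of _ "Q @ [(2,j)]"]) simp
  qed
qed

lemma crossing:
  "xs \<noteq> [] \<Longrightarrow> Q (hd xs) \<Longrightarrow> \<not> Q (last xs) \<Longrightarrow>
    \<exists>k. Suc k < length xs \<and> Q (xs ! k) \<and> \<not> Q (xs ! Suc k)"
proof (induction xs)
  case Nil then show ?case by simp
next
  case (Cons a xs)
  show ?case
  proof (cases "xs = []")
    case True then show ?thesis using Cons by simp
  next
    case False
    show ?thesis
    proof (cases "Q (hd xs)")
      case True
      then obtain k where "Suc k < length xs" "Q (xs ! k)" "\<not> Q (xs ! Suc k)"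
        using Cons False by auto
      then show ?thesis by (intro exI[of _ "Suc k"]) auto
    next
      case F: False
      then show ?thesis using Cons False by (intro exI[of _ 0]) (auto simp: hd_conv_nth)
    qed
  qed
qed

theorem lemma5p6:
  fixes n :: nat and \<gamma> \<beta> :: "nat \<times> nat \<Rightarrow> int" and H :: int
  assumes "n \<ge> 1" and "proper3 n \<gamma>" and "proper3 n \<beta>"
  defines "Y \<equiv> image_mset (\<lambda>v. H + rel_height n \<gamma> (1,1) \<beta> v) (mset_set (grid_V n))"
  shows "\<forall>k. Suc k < size Y \<longrightarrow>
           sorted_list_of_multiset Y ! Suc k - sorted_list_of_multiset Y ! k \<in> {0, 2}"
proof (intro allI impI)
  define S where "S = grid_V n"
  define f where "f = (\<lambda>v. H + rel_height n \<gamma> (1,1) \<beta> v)"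
  have finS: "finite S" by (simp add: S_def grid_V_def)
  have Yf: "Y = image_mset f (mset_set S)" by (simp add: Y_def f_def S_def)
  have relh: "rel_height n \<gamma> (1,1) \<beta> v = (hh \<beta> v - hh \<gamma> v) - (hh \<beta> (1,1) - hh \<gamma> (1,1))"
    if "v \<in> S" for v
  proof -
    define P where "P = (SOME P. is_dpath n P (1,1) v)"
    have P: "is_dpath n P (1,1) v" unfolding P_def
      using someI_ex[OF path_exists] that S_def by blast
    have P1: "P \<noteq> []" "hd P = (1,1)" "last P = v"
      "\<forall>k. Suc k < length P \<longrightarrow> grid_adj n (P ! k) (P ! Suc k)"
      using P unfolding is_dpath_def by blast+
    have "path_weight \<beta> P = hh \<beta> v - hh \<beta> (1,1)" "path_weight \<gamma> P = hh \<gamma> v - hh \<gamma> (1,1)"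
      using pw_hh[OF assms(3) P1(1,4)] pw_hh[OF assms(2) P1(1,4)] P1(2,3) by simp_all
    then show ?thesis unfolding rel_height_def Let_def P_def[symmetric] by simp
  qed
  have ev: "even (f v - H)" for v
    unfolding f_def rel_height_def Let_def using pw_even by simp
  have stp: "f y - f x \<le> 2" if a: "grid_adj n x y" for x y
  proof -
    have "x \<in> S" "y \<in> S" using adj_V[OF a] S_def by auto
    then have "f y - f x = (hh \<beta> y - hh \<beta> x) - (hh \<gamma> y - hh \<gamma> x)"
      using relh by (simp add: f_def)
    also have "\<dots> = edge_weight \<beta> x y - edge_weight \<gamma> x y"
      using ew_hh[OF assms(3) a] ew_hh[OF assms(2) a] by simp
    finally show ?thesis by (simp add: edge_weight_def)
  qed
  have conn: "\<exists>x y. grid_adj n x y \<and> Q x \<and> \<not> Q y"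
    if uw: "u \<in> S" "w \<in> S" "Q u" "\<not> Q w" for u w Q
  proof -
    obtain Pu where Pu: "is_dpath n Pu (1,1) u" using path_exists uw S_def by blast
    obtain Pw where Pw: "is_dpath n Pw (1,1) w" using path_exists uw S_def by blast
    show ?thesis
    proof (cases "Q (1,1)")
      case True
      have P1: "Pw \<noteq> []" "hd Pw = (1,1)" "last Pw = w"
        "\<forall>k. Suc k < length Pw \<longrightarrow> grid_adj n (Pw ! k) (Pw ! Suc k)"
        using Pw unfolding is_dpath_def by blast+
      obtain k where "Suc k < length Pw" "Q (Pw ! k)" "\<not> Q (Pw ! Suc k)"
        using crossing[of Pw Q, OF P1(1)] P1(2,3) True uw(4) by auto
      then show ?thesis using P1(4) by blast
    next
      case False
      have P1: "Pu \<noteq> []" "hd Pu = (1,1)" "last Pu = u"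
        "\<forall>k. Suc k < length Pu \<longrightarrow> grid_adj n (Pu ! k) (Pu ! Suc k)"
        using Pu unfolding is_dpath_def by blast+
      obtain k where "Suc k < length Pu" "\<not> Q (Pu ! k)" "\<not> \<not> Q (Pu ! Suc k)"
        using crossing[of Pu "\<lambda>x. \<not> Q x", OF P1(1)] P1(2,3) False uw(3) by auto
      then show ?thesis using P1(4) adj_sym by blast
    qed
  qed
  fix k assume k: "Suc k < size Y"
  define s where "s = sorted_list_of_multiset Y"
  have ls: "length s = size Y" unfolding s_def by (metis mset_sorted_list_of_multiset size_mset)
  have ss: "sorted s" unfolding s_def by simp
  have sets: "set s = f ` S" unfolding s_def Yf using finS by simp
  define a where "a = s ! k"
  define b where "b = s ! Suc k"
  have ab: "a \<le> b" unfolding a_def b_def using sorted_nth_mono[OF ss, of k "Suc k"] k ls by linarith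
  have aS: "a \<in> f ` S" unfolding a_def using k ls sets by (metis Suc_lessD nth_mem)
  have bS: "b \<in> f ` S" unfolding b_def using k ls sets by (metis nth_mem)
  have btw: "x \<le> a \<or> b \<le> x" if "x \<in> f ` S" for x
  proof -
    have "x \<in> set s" using that sets by simp
    then obtain m where m: "m < length s" "x = s ! m" by (auto simp: in_set_conv_nth)
    show ?thesis
    proof (cases "m \<le> k")
      case True then show ?thesis using sorted_nth_mono[OF ss, of m k] m k ls unfolding a_def by linarith
    next
      case False then show ?thesis using sorted_nth_mono[OF ss, of "Suc k" m] m k ls unfolding b_def by linarith
    qed
  qed
  obtain pa where pa: "pa \<in> S" "f pa = a" using aS by blast
  obtain pb where pb: "pb \<in> S" "f pb = b" using bS by blast
  have bma: "b - a = (f pb - H) - (f pa - H)" using pa pb by simp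
  have evab: "even (b - a)" unfolding bma using ev[of pa] ev[of pb] by simp
  show "s ! Suc k - s ! k \<in> {0, 2}"
  proof (rule ccontr)
    assume nn: "s ! Suc k - s ! k \<notin> {0, 2}"
    then have nn2: "b - a \<noteq> 0" "b - a \<noteq> 2" unfolding a_def b_def by auto
    have "b - a \<ge> 3" using ab evab nn2 by presburger
    obtain x y where xy: "grid_adj n x y" "f x \<le> a" "\<not> f y \<le> a"
      using conn[of pa pb "\<lambda>v. f v \<le> a"] pa pb \<open>b - a \<ge> 3\<close> by auto
    have "y \<in> S" using adj_V[OF xy(1)] S_def by auto
    then have "f y \<ge> b" using btw xy(3) by blast
    then show False using stp[OF xy(1)] xy(2) \<open>b - a \<ge> 3\<close> by linarith
  qed
qed

end
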